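(* Let $n,n'\in\mathbb{N}$ and let $\phi:\mathbb{N}^n\to\mathbb{N}^{n'}$ be a map that preserves joins and meets, i.e. $\phi(a\vee b)=\phi(a)\vee\phi(b)$ and $\phi(a\wedge b)=\phi(a)\wedge\phi(b)$ for all $a,b\in\mathbb{N}^n$. Then $\phi$ changes the Stanley depth by $n-n'$ with respect to any $g\in\mathbb{N}^n$ and $g':=\phi(g)$.
   Context: $\mathbb{N}^n$ carries the componentwise partial order, with $\vee$ and $\wedge$ the componentwise maximum and minimum; $[a,b]=\{c: a\le c\le b\}$; a map is monotonic if it preserves this order. A monotonic map $\phi:\mathbb{N}^n\to\mathbb{N}^{n'}$ changes the Stanley depth by $\ell\in\mathbb{Z}$ with respect to $g\in\mathbb{N}^n$ and $g'\in\mathbb{N}^{n'}$ if (1) $\phi(g)\le g'$, and (2) for every interval $[a',b']\subset[0,g']$, the set $\phi^{-1}([a',b'])\cap[0,g]$ is a finite disjoint union $\bigcup_i[a^i,b^i]$ of intervals with $\#\{j\in[n]: b^i_j=g_j\}\ge\#\{j\in[n']: b'_j=g'_j\}+\ell$ for all $i$. *)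

theory Defs
  imports Main
begin

text \<open>Elements of N^n are modelled as functions nat => nat that vanish at all indices >= n.
  The order, join and meet are the pointwise ones on nat => nat (le_fun, sup, inf).\<close>

definition NN :: "nat \<Rightarrow> (nat \<Rightarrow> nat) set" where
  "NN n = {a. \<forall>i\<ge>n. a i = 0}"

definition intv :: "nat \<Rightarrow> (nat \<Rightarrow> nat) \<Rightarrow> (nat \<Rightarrow> nat) \<Rightarrow> (nat \<Rightarrow> nat) set" where
  "intv n a b = {c \<in> NN n. a \<le> c \<and> c \<le> b}"

definition nmax :: "nat \<Rightarrow> (nat \<Rightarrow> nat) \<Rightarrow> (nat \<Rightarrow> nat) \<Rightarrow> nat" where
  "nmax n b g = card {j. j < n \<and> b j = g j}"

definition changes_sdepth ::
  "nat \<Rightarrow> nat \<Rightarrow> ((nat \<Rightarrow> nat) \<Rightarrow> (nat \<Rightarrow> nat)) \<Rightarrow> int \<Rightarrow> (nat \<Rightarrow> nat) \<Rightarrow> (nat \<Rightarrow> nat) \<Rightarrow> bool" where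
  "changes_sdepth n n' \<phi> l g g' \<longleftrightarrow>
     \<phi> g \<le> g' \<and>
     (\<forall>a' \<in> NN n'. \<forall>b' \<in> NN n'. intv n' a' b' \<subseteq> intv n' (\<lambda>_. 0) g' \<longrightarrow>
        (\<exists>D :: ((nat \<Rightarrow> nat) \<times> (nat \<Rightarrow> nat)) set.
           finite D \<and>
           (\<forall>(a,b) \<in> D. a \<in> NN n \<and> b \<in> NN n \<and> a \<le> b) \<and>
           (\<forall>p \<in> D. \<forall>q \<in> D. p \<noteq> q \<longrightarrow> intv n (fst p) (snd p) \<inter> intv n (fst q) (snd q) = {}) \<and>
           {c \<in> intv n (\<lambda>_. 0) g. \<phi> c \<in> intv n' a' b'} = (\<Union>(a,b) \<in> D. intv n a b) \<and>
           (\<forall>(a,b) \<in> D. int (nmax n b g) \<ge> int (nmax n' b' g') + l)))"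

end

theory Submission
  imports Defs "HOL-Library.FuncSet"
begin

lemma card_split_lt:
  "card {j. j < n \<and> P j} + card {j. j < n \<and> \<not> P j} = n"
proof -
  have "card ({j. j < n \<and> P j} \<union> {j. j < n \<and> \<not> P j}) = card {j. j < n \<and> P j} + card {j. j < n \<and> \<not> P j}"
    by (rule card_Un_disjoint) auto
  moreover have "{j. j < n \<and> P j} \<union> {j. j < n \<and> \<not> P j} = {..<n}" by auto
  ultimately show ?thesis by simp
qed

lemma finite_intv0: "finite (intv n (\<lambda>_. 0) g)"
proof -
  let ?r = "\<lambda>c. restrict c {..<n}"
  have "?r ` intv n (\<lambda>_. 0) g \<subseteq> PiE {..<n} (\<lambda>i. {..g i})"
    by (auto simp: intv_def le_fun_def PiE_def extensional_def)
  hence f: "finite (?r ` intv n (\<lambda>_. 0) g)"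
    by (rule finite_subset) (auto intro: finite_PiE)
  have "inj_on ?r (intv n (\<lambda>_. 0) g)"
  proof (rule inj_onI)
    fix x y assume x: "x \<in> intv n (\<lambda>_. 0) g" and y: "y \<in> intv n (\<lambda>_. 0) g" and e: "?r x = ?r y"
    show "x = y"
    proof
      fix i show "x i = y i"
      proof (cases "i < n")
        case True then show ?thesis using fun_cong[OF e, of i] by simp
      next
        case False then show ?thesis using x y by (auto simp: intv_def NN_def)
      qed
    qed
  qed
  then show ?thesis using f finite_imageD by blast
qed

theorem theorem3p7:
  fixes n n' :: nat and \<phi> :: "(nat \<Rightarrow> nat) \<Rightarrow> (nat \<Rightarrow> nat)" and g :: "nat \<Rightarrow> nat"
  assumes maps: "\<And>a. a \<in> NN n \<Longrightarrow> \<phi> a \<in> NN n'"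
    and join: "\<And>a b. a \<in> NN n \<Longrightarrow> b \<in> NN n \<Longrightarrow> \<phi> (sup a b) = sup (\<phi> a) (\<phi> b)"
    and meet: "\<And>a b. a \<in> NN n \<Longrightarrow> b \<in> NN n \<Longrightarrow> \<phi> (inf a b) = inf (\<phi> a) (\<phi> b)"
    and g: "g \<in> NN n"
  shows "changes_sdepth n n' \<phi> (int n - int n') g (\<phi> g)"
  unfolding changes_sdepth_def
proof (intro conjI ballI impI)
  show "\<phi> g \<le> \<phi> g" by simp
next
  fix a' b' assume a': "a' \<in> NN n'" and b': "b' \<in> NN n'"
  have mono: "\<phi> c \<le> \<phi> d" if "c \<in> NN n" "d \<in> NN n" "c \<le> d" for c d
  proof -
    have "sup c d = d" using that(3) by (simp add: sup_absorb2)
    hence "\<phi> d = sup (\<phi> c) (\<phi> d)" using join[OF that(1,2)] by simp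
    thus ?thesis by (metis sup.cobounded1)
  qed
  have supNN: "sup c d \<in> NN n" if "c \<in> NN n" "d \<in> NN n" for c d
    using that by (auto simp: NN_def)
  have infNN: "inf c d \<in> NN n" if "c \<in> NN n" "d \<in> NN n" for c d
    using that by (auto simp: NN_def)
  define P where "P = {c \<in> intv n (\<lambda>_. 0) g. \<phi> c \<in> intv n' a' b'}"
  have finP: "finite P" unfolding P_def using finite_intv0[of n g] by auto
  show "\<exists>D. finite D \<and>
           (\<forall>(a,b) \<in> D. a \<in> NN n \<and> b \<in> NN n \<and> a \<le> b) \<and>
           (\<forall>p \<in> D. \<forall>q \<in> D. p \<noteq> q \<longrightarrow> intv n (fst p) (snd p) \<inter> intv n (fst q) (snd q) = {}) \<and>
           {c \<in> intv n (\<lambda>_. 0) g. \<phi> c \<in> intv n' a' b'} = (\<Union>(a,b) \<in> D. intv n a b) \<and>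
           (\<forall>(a,b) \<in> D. int (nmax n b g) \<ge> int (nmax n' b' (\<phi> g)) + (int n - int n'))"
  proof (cases "P = {}")
    case True
    show ?thesis by (rule exI[of _ "{}"]) (use True in \<open>auto simp: P_def\<close>)
  next
    case False
    have Psup: "sup c d \<in> P" if "c \<in> P" "d \<in> P" for c d
    proof -
      have cN: "c \<in> NN n" and dN: "d \<in> NN n" using that by (auto simp: P_def intv_def)
      show ?thesis using that join[OF cN dN] maps[OF supNN[OF cN dN]] supNN[OF cN dN]
        by (auto simp: P_def intv_def le_sup_iff intro: le_supI1)
    qed
    have Pinf: "inf c d \<in> P" if "c \<in> P" "d \<in> P" for c d
    proof -
      have cN: "c \<in> NN n" and dN: "d \<in> NN n" using that by (auto simp: P_def intv_def)
      show ?thesis using that meet[OF cN dN] maps[OF infNN[OF cN dN]] infNN[OF cN dN]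
        by (auto simp: P_def intv_def le_inf_iff intro: le_infI1)
    qed
    obtain m where m: "m \<in> P" and mmax: "\<And>c. c \<in> P \<Longrightarrow> m \<le> c \<Longrightarrow> m = c"
      using finite_has_maximal[OF finP False] by blast
    have mge: "c \<le> m" if "c \<in> P" for c
      using mmax[OF Psup[OF m that]] by (metis sup.cobounded1 sup.cobounded2)
    obtain m0 where m0: "m0 \<in> P" and mmin: "\<And>c. c \<in> P \<Longrightarrow> c \<le> m0 \<Longrightarrow> m0 = c"
      using finite_has_minimal[OF finP False] by blast
    have mle: "m0 \<le> c" if "c \<in> P" for c
      using mmin[OF Pinf[OF m0 that]] by (metis inf.cobounded1 inf.cobounded2)
    have mN: "m \<in> NN n" and m0N: "m0 \<in> NN n" and mg: "m \<le> g"
      using m m0 by (auto simp: P_def intv_def)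
    have gN: "g \<in> NN n" by (rule g)
    have Peq: "P = intv n m0 m"
    proof
      show "P \<subseteq> intv n m0 m" using mge mle by (auto simp: P_def intv_def)
    next
      show "intv n m0 m \<subseteq> P"
      proof
        fix c assume c: "c \<in> intv n m0 m"
        hence cN: "c \<in> NN n" and c1: "m0 \<le> c" and c2: "c \<le> m" by (auto simp: intv_def)
        have "\<phi> m0 \<le> \<phi> c" "\<phi> c \<le> \<phi> m" using mono cN mN m0N c1 c2 by auto
        moreover have "a' \<le> \<phi> m0" "\<phi> m \<le> b'" using m m0 by (auto simp: P_def intv_def)
        ultimately show "c \<in> P" using cN c2 mg maps[OF cN]
          by (auto simp: P_def intv_def le_fun_def intro: order_trans)
      qed
    qed
    define S where "S = {i. i < n \<and> m i \<noteq> g i}"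
    define T where "T = {j. j < n' \<and> b' j \<noteq> \<phi> g j}"
    define e where "e i = m(i := Suc (m i))" for i
    have ex: "\<exists>j. j < n' \<and> b' j < \<phi> (e i) j" if iS: "i \<in> S" for i
    proof -
      have "m i < g i" using iS mg by (auto simp: S_def le_fun_def dest: spec[of _ i])
      have eN: "e i \<in> NN n" using mN iS by (auto simp: e_def NN_def S_def)
      have me: "m \<le> e i" by (auto simp: e_def le_fun_def)
      have eg: "e i \<le> g" using mg \<open>m i < g i\<close> by (auto simp: e_def le_fun_def)
      have "e i \<notin> P"
      proof
        assume "e i \<in> P" then have "e i \<le> m" by (rule mge)
        thus False by (auto simp: e_def le_fun_def dest: spec[of _ i])
      qed
      moreover have "a' \<le> \<phi> (e i)"
      proof -
        have "a' \<le> \<phi> m0" using m0 by (auto simp: P_def intv_def)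
        also have "\<phi> m0 \<le> \<phi> m" using mono m0N mN mle[OF m] by auto
        also have "\<phi> m \<le> \<phi> (e i)" using mono mN eN me by auto
        finally show ?thesis .
      qed
      moreover have "(\<lambda>_. 0) \<le> e i" by (simp add: le_fun_def)
      ultimately have "\<not> \<phi> (e i) \<le> b'" using eN eg maps[OF eN]
        by (auto simp: P_def intv_def)
      then obtain j where j: "b' j < \<phi> (e i) j" by (auto simp: le_fun_def not_le)
      have "j < n'" using j maps[OF eN] by (auto simp: NN_def intro: ccontr)
      thus ?thesis using j by blast
    qed
    define h where "h i = (SOME j. j < n' \<and> b' j < \<phi> (e i) j)" for i
    have h: "h i < n' \<and> b' (h i) < \<phi> (e i) (h i)" if "i \<in> S" for i
      unfolding h_def using someI_ex[OF ex[OF that]] .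
    have "inj_on h S"
    proof (rule inj_onI, rule ccontr)
      fix i1 i2 assume i1: "i1 \<in> S" and i2: "i2 \<in> S" and eq: "h i1 = h i2" and ne: "i1 \<noteq> i2"
      have e1N: "e i1 \<in> NN n" and e2N: "e i2 \<in> NN n" using mN i1 i2 by (auto simp: e_def NN_def S_def)
      have "inf (e i1) (e i2) = m" using ne by (auto simp: e_def fun_eq_iff inf_nat_def)
      hence "\<phi> m = inf (\<phi> (e i1)) (\<phi> (e i2))" using meet[OF e1N e2N] by simp
      hence "\<phi> m (h i1) = min (\<phi> (e i1) (h i1)) (\<phi> (e i2) (h i1))" by (simp add: inf_nat_def)
      moreover have "\<phi> m \<le> b'" using m by (auto simp: P_def intv_def)
      ultimately show False using h[OF i1] h[OF i2] eq by (auto simp: le_fun_def dest: spec[of _ "h i1"])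
    qed
    moreover have "h ` S \<subseteq> T"
    proof
      fix j assume "j \<in> h ` S"
      then obtain i where i: "i \<in> S" and j: "j = h i" by blast
      have eN: "e i \<in> NN n" using mN i by (auto simp: e_def NN_def S_def)
      have "m i < g i" using i mg by (auto simp: S_def le_fun_def dest: spec[of _ i])
      have eg: "e i \<le> g" using mg \<open>m i < g i\<close> by (auto simp: e_def le_fun_def)
      have "\<phi> (e i) \<le> \<phi> g" using mono eN gN eg by auto
      thus "j \<in> T" using h[OF i] j by (auto simp: T_def le_fun_def dest: spec[of _ "h i"])
    qed
    moreover have "finite T" by (auto simp: T_def)
    ultimately have ST: "card S \<le> card T" using card_inj_on_le by blast
    have c1: "nmax n m g + card S = n" unfolding nmax_def S_def using card_split_lt[of n "\<lambda>j. m j = g j"] by simp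
    have c2: "nmax n' b' (\<phi> g) + card T = n'" unfolding nmax_def T_def using card_split_lt[of n' "\<lambda>j. b' j = \<phi> g j"] by simp
    show ?thesis
    proof (rule exI[of _ "{(m0, m)}"], intro conjI)
      show "{c \<in> intv n (\<lambda>_. 0) g. \<phi> c \<in> intv n' a' b'} = (\<Union>(a,b) \<in> {(m0, m)}. intv n a b)"
        using Peq by (simp add: P_def)
      show "\<forall>(a,b) \<in> {(m0, m)}. int (nmax n b g) \<ge> int (nmax n' b' (\<phi> g)) + (int n - int n')"
        using c1 c2 ST by simp
    qed (use m0N mN mle[OF m] in auto)
  qed
qed

end
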